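(* $A_3(16,11)\le 29$.
   Context: $[q]=\{0,\dots,q-1\}$; Hamming distance between words of $[q]^n$ is the number of differing coordinates; $A_q(n,d)$ is the maximum cardinality of a code $C\subseteq[q]^n$ in which any two distinct codewords have Hamming distance at least $d$. *)

theory Defs
  imports Main "HOL-Library.FuncSet"
begin

definition words :: "nat \<Rightarrow> nat \<Rightarrow> (nat \<Rightarrow> nat) set" where
  "words q n = ({0..<n} \<rightarrow>\<^sub>E {0..<q})"

definition hamming :: "nat \<Rightarrow> (nat \<Rightarrow> nat) \<Rightarrow> (nat \<Rightarrow> nat) \<Rightarrow> nat" where
  "hamming n x y = card {i \<in> {0..<n}. x i \<noteq> y i}"

definition is_code :: "nat \<Rightarrow> nat \<Rightarrow> nat \<Rightarrow> (nat \<Rightarrow> nat) set \<Rightarrow> bool" where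
  "is_code q n d C \<longleftrightarrow> C \<subseteq> words q n \<and>
     (\<forall>x\<in>C. \<forall>y\<in>C. x \<noteq> y \<longrightarrow> hamming n x y \<ge> d)"

text \<open>A_q(n,d): maximum cardinality of such a code (the set of words is finite,
  so the maximum exists).\<close>
definition A :: "nat \<Rightarrow> nat \<Rightarrow> nat \<Rightarrow> nat" where
  "A q n d = Max (card ` {C. is_code q n d C})"

end

theory Submission
  imports Defs
begin

definition agr :: "(nat \<Rightarrow> nat) \<Rightarrow> (nat \<Rightarrow> nat) \<Rightarrow> nat" where
  "agr x y = card {i \<in> {0..<16}. x i = y i}"

definition cnt :: "(nat \<Rightarrow> nat) set \<Rightarrow> nat \<Rightarrow> nat \<Rightarrow> nat" where
  "cnt S i t = card {x \<in> S. x i = t}"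

lemma card_filter_sum: "finite B \<Longrightarrow> card {x\<in>B. P x} = (\<Sum>x\<in>B. if P x then 1 else 0::nat)"
proof -
  assume f: "finite B"
  have "card {x\<in>B. P x} = (\<Sum>x\<in>{x\<in>B. P x}. 1::nat)" by (rule card_eq_sum)
  also have "\<dots> = (\<Sum>x\<in>B. if P x then 1 else 0::nat)" using f by (rule sum.inter_filter)
  finally show ?thesis .
qed

lemma hamming_agr: "hamming 16 x y + agr x y = 16"
proof -
  have "{i \<in> {0..<16::nat}. x i \<noteq> y i} \<union> {i \<in> {0..<16}. x i = y i} = {0..<16}" by auto
  moreover have "{i \<in> {0..<16::nat}. x i \<noteq> y i} \<inter> {i \<in> {0..<16}. x i = y i} = {}" by auto
  ultimately have "card {i \<in> {0..<16::nat}. x i \<noteq> y i} + card {i \<in> {0..<16}. x i = y i} = card {0..<16::nat}"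
    using card_Un_disjoint[of "{i \<in> {0..<16::nat}. x i \<noteq> y i}" "{i \<in> {0..<16}. x i = y i}"] by simp
  thus ?thesis unfolding hamming_def agr_def by simp
qed

lemma agr_sum: "agr x y = (\<Sum>i<16. if x i = y i then 1 else 0)"
  unfolding agr_def using card_filter_sum[of "{0..<16::nat}" "\<lambda>i. x i = y i"]
  by (simp add: atLeast0LessThan)

lemma agr_self: "agr x x = 16" unfolding agr_def by simp

lemma code_agr: "is_code 3 16 11 C \<Longrightarrow> x \<in> C \<Longrightarrow> y \<in> C \<Longrightarrow> x \<noteq> y \<Longrightarrow> agr x y \<le> 5"
  unfolding is_code_def using hamming_agr[of x y] by force

lemma words_lt: "x \<in> words 3 16 \<Longrightarrow> i < 16 \<Longrightarrow> x i < 3"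
  unfolding words_def by (auto simp: PiE_def Pi_def)

lemma finite_words: "finite (words q n)"
  unfolding words_def by (simp add: finite_PiE)

lemma row_sum: "finite S \<Longrightarrow> (\<Sum>y\<in>S. agr x y) = (\<Sum>i<16. cnt S i (x i))"
proof -
  assume f: "finite S"
  have "(\<Sum>y\<in>S. agr x y) = (\<Sum>y\<in>S. \<Sum>i<16. if y i = x i then 1 else 0)"
    by (simp add: agr_sum eq_commute)
  also have "\<dots> = (\<Sum>i<16. \<Sum>y\<in>S. if y i = x i then 1 else 0)" by (rule sum.swap)
  also have "\<dots> = (\<Sum>i<16. cnt S i (x i))"
    unfolding cnt_def using card_filter_sum[OF f] by simp
  finally show ?thesis .
qed

lemma cnt_total:
  assumes f: "finite S" and lt: "\<forall>u\<in>S. u i < 3"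
  shows "cnt S i 0 + cnt S i 1 + cnt S i 2 = card S"
proof -
  have "card S = (\<Sum>u\<in>S. 1::nat)" by simp
  also have "\<dots> = (\<Sum>t\<in>{0,1,2::nat}. \<Sum>u\<in>{u. u\<in>S \<and> u i = t}. 1)"
    by (rule sum.group[symmetric]) (use f lt in auto)
  also have "\<dots> = cnt S i 0 + cnt S i 1 + cnt S i 2" by (simp add: cnt_def)
  finally show ?thesis by simp
qed

lemma E_eq:
  assumes f: "finite S" and lt: "\<forall>u\<in>S. u i < 3"
  shows "(\<Sum>u\<in>S. cnt S i (u i)) = cnt S i 0 ^2 + cnt S i 1 ^2 + cnt S i 2 ^2"
proof -
  have "(\<Sum>u\<in>S. cnt S i (u i)) = (\<Sum>t\<in>{0,1,2::nat}. \<Sum>u\<in>{u. u\<in>S \<and> u i = t}. cnt S i (u i))"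
    by (rule sum.group[symmetric]) (use f lt in auto)
  also have "\<dots> = (\<Sum>t\<in>{0,1,2::nat}. \<Sum>u\<in>{u. u\<in>S \<and> u i = t}. cnt S i t)"
    by (intro sum.cong) auto
  also have "\<dots> = cnt S i 0 ^2 + cnt S i 1 ^2 + cnt S i 2 ^2" by (simp add: cnt_def power2_eq_square)
  finally show ?thesis .
qed

lemma sq3: "((a::nat)+b+c)^2 \<le> 3*(a^2+b^2+c^2)"
proof -
  have e: "3*(int a^2 + int b^2 + int c^2) - (int a + int b + int c)^2
        = (int a - int b)^2 + (int b - int c)^2 + (int c - int a)^2"
    by (simp add: power2_eq_square algebra_simps)
  have "(int a - int b)^2 + (int b - int c)^2 + (int c - int a)^2 \<ge> 0" by simp
  hence "(int a + int b + int c)^2 \<le> 3*(int a^2 + int b^2 + int c^2)" using e by linarith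
  hence "int ((a+b+c)^2) \<le> int (3*(a^2+b^2+c^2))" by simp
  thus ?thesis by (simp only: of_nat_le_iff)
qed

definition Q :: "(nat \<Rightarrow> nat) set \<Rightarrow> nat \<Rightarrow> nat" where
  "Q S i = (\<Sum>u\<in>S. cnt S i (u i))"

lemma dbl: "finite S \<Longrightarrow> (\<Sum>u\<in>S. \<Sum>v\<in>S. agr u v) = (\<Sum>i<16. Q S i)"
proof -
  assume f: "finite S"
  have "(\<Sum>u\<in>S. \<Sum>v\<in>S. agr u v) = (\<Sum>u\<in>S. \<Sum>i<16. cnt S i (u i))"
    using row_sum[OF f] by simp
  also have "\<dots> = (\<Sum>i<16. \<Sum>u\<in>S. cnt S i (u i))" by (rule sum.swap)
  finally show ?thesis by (simp add: Q_def)
qed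

lemma Q_lb: "finite S \<Longrightarrow> \<forall>u\<in>S. u i < 3 \<Longrightarrow> card S ^ 2 \<le> 3 * Q S i"
  unfolding Q_def using E_eq[of S i] cnt_total[of S i] sq3[of "cnt S i 0" "cnt S i 1" "cnt S i 2"]
  by simp

lemma Q_j: "\<forall>u\<in>S. u j = s \<Longrightarrow> Q S j = card S ^ 2"
proof -
  assume a: "\<forall>u\<in>S. u j = s"
  have "\<forall>u\<in>S. cnt S j (u j) = card S"
    unfolding cnt_def using a by (metis (mono_tags, lifting) Collect_cong Collect_mem_eq)
  then show ?thesis unfolding Q_def by (simp add: power2_eq_square)
qed

lemma lower_total:
  assumes "j < 16" "\<forall>i<16. i \<noteq> j \<longrightarrow> L \<le> Q S i"
  shows "Q S j + 15 * L \<le> (\<Sum>i<16. Q S i)"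
proof -
  have "(\<Sum>i<16. Q S i) = Q S j + (\<Sum>i\<in>{..<16} - {j}. Q S i)"
    using assms(1) by (simp add: sum.remove)
  moreover have "card ({..<16::nat} - {j}) * L \<le> (\<Sum>i\<in>{..<16} - {j}. Q S i)"
    using sum_bounded_below[of "{..<16::nat} - {j}" L "Q S"] assms(2) by auto
  moreover have "card ({..<16::nat} - {j}) = 15" using assms(1) by simp
  ultimately show ?thesis by simp
qed

lemma upper_row:
  assumes c: "is_code 3 16 11 C" and sub: "S \<subseteq> C" and f: "finite S" and u: "u \<in> S"
  shows "(\<Sum>v\<in>S. agr u v) \<le> 16 + 5 * (card S - 1)"
proof -
  have "(\<Sum>v\<in>S. agr u v) = agr u u + (\<Sum>v\<in>S - {u}. agr u v)"
    using f u by (simp add: sum.remove)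
  moreover have "\<forall>v\<in>S - {u}. agr u v \<le> 5" using c sub u code_agr by blast
  hence "(\<Sum>v\<in>S - {u}. agr u v) \<le> card (S - {u}) * 5"
    using sum_bounded_above[of "S - {u}" "agr u" 5] by simp
  moreover note this
  moreover have "card (S - {u}) = card S - 1" using f u by simp
  ultimately show ?thesis by (simp add: agr_self)
qed

lemma upper_row2:
  assumes c: "is_code 3 16 11 C" and sub: "S \<subseteq> C" and f: "finite S" and u: "u \<in> S"
    and y: "y \<in> S" "y \<noteq> u" "agr u y \<le> 4"
  shows "(\<Sum>v\<in>S. agr u v) + 1 \<le> 16 + 5 * (card S - 1)"
proof -
  have "(\<Sum>v\<in>S. agr u v) = agr u u + (\<Sum>v\<in>S - {u}. agr u v)"
    using f u by (simp add: sum.remove)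
  moreover have "(\<Sum>v\<in>S - {u}. agr u v) = agr u y + (\<Sum>v\<in>S - {u} - {y}. agr u v)"
    using f y by (simp add: sum.remove)
  moreover have "\<forall>v\<in>S - {u} - {y}. agr u v \<le> 5" using c sub u code_agr by blast
  hence "(\<Sum>v\<in>S - {u} - {y}. agr u v) \<le> card (S - {u} - {y}) * 5"
    using sum_bounded_above[of "S - {u} - {y}" "agr u" 5] by simp
  moreover note this
  moreover have "card (S - {u} - {y}) = card S - 2" using f u y by simp
  moreover have "card S \<ge> 2"
  proof -
    have "card {u, y} \<le> card S" using f u y(1) by (intro card_mono) auto
    thus ?thesis using y(2) by simp
  qed
  ultimately show ?thesis using y(3) by (simp add: agr_self)
qed

lemma class_common:
  assumes c: "is_code 3 16 11 C" and sub: "S \<subseteq> C" and j: "j < 16" and s: "\<forall>u\<in>S. u j = s"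
  shows "finite S" "\<forall>i<16. i \<noteq> j \<longrightarrow> card S ^ 2 \<le> 3 * Q S i" "Q S j = card S ^ 2"
proof -
  show f: "finite S" using c sub finite_words unfolding is_code_def by (meson finite_subset)
  show "\<forall>i<16. i \<noteq> j \<longrightarrow> card S ^ 2 \<le> 3 * Q S i"
    using Q_lb[OF f] c sub words_lt unfolding is_code_def by blast
  show "Q S j = card S ^ 2" using Q_j s by blast
qed

lemma class11:
  assumes c: "is_code 3 16 11 C" and sub: "S \<subseteq> C" and j: "j < 16" and s: "\<forall>u\<in>S. u j = s"
  shows "card S \<noteq> 11"
proof
  assume m: "card S = 11"
  note cc = class_common[OF assms]
  have "\<forall>i<16. i \<noteq> j \<longrightarrow> 41 \<le> Q S i"
  proof (intro allI impI)
    fix i assume "i < (16::nat)" "i \<noteq> j"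
    hence "121 \<le> 3 * Q S i" using cc(2) m by (simp add: power2_eq_square)
    thus "41 \<le> Q S i" by linarith
  qed
  from lower_total[OF j this] cc(3) m have lo: "736 \<le> (\<Sum>i<16. Q S i)" by simp
  have "(\<Sum>u\<in>S. \<Sum>v\<in>S. agr u v) \<le> card S * (16 + 5 * (card S - 1))"
    using upper_row[OF c sub cc(1)] sum_bounded_above[of S "\<lambda>u. \<Sum>v\<in>S. agr u v" "16 + 5 * (card S - 1)"] by simp
  with dbl[OF cc(1)] lo m show False by simp
qed

lemma class10:
  assumes c: "is_code 3 16 11 C" and sub: "S \<subseteq> C" and j: "j < 16" and s: "\<forall>u\<in>S. u j = s"
    and m: "card S = 10" and x: "x \<in> S" and y: "y \<in> S" "y \<noteq> x" "agr x y \<le> 4"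
  shows False
proof -
  note cc = class_common[OF c sub j s]
  have "\<forall>i<16. i \<noteq> j \<longrightarrow> 34 \<le> Q S i"
  proof (intro allI impI)
    fix i assume "i < (16::nat)" "i \<noteq> j"
    hence "100 \<le> 3 * Q S i" using cc(2) m by (simp add: power2_eq_square)
    thus "34 \<le> Q S i" by linarith
  qed
  from lower_total[OF j this] cc(3) m have lo: "610 \<le> (\<Sum>i<16. Q S i)" by simp
  have "(\<Sum>u\<in>S. \<Sum>v\<in>S. agr u v) = (\<Sum>v\<in>S. agr x v) + (\<Sum>u\<in>S-{x}. \<Sum>v\<in>S. agr u v)"
    using cc(1) x by (rule sum.remove)
  moreover have "(\<Sum>u\<in>S-{x}. \<Sum>v\<in>S. agr u v) \<le> card (S-{x}) * (16 + 5 * (card S - 1))"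
    using sum_bounded_above[of "S-{x}" "\<lambda>u. \<Sum>v\<in>S. agr u v" "16 + 5 * (card S - 1)"] upper_row[OF c sub cc(1)] by auto
  moreover have "card (S-{x}) = 9" using m x cc(1) by simp
  moreover have "(\<Sum>v\<in>S. agr x v) + 1 \<le> 16 + 5 * (card S - 1)"
    by (rule upper_row2[OF c sub cc(1) x y])
  ultimately have "(\<Sum>u\<in>S. \<Sum>v\<in>S. agr u v) \<le> 609" using m by simp
  with dbl[OF cc(1)] lo show False by simp
qed

lemma subcode: "is_code q n d C \<Longrightarrow> D \<subseteq> C \<Longrightarrow> is_code q n d D"
  unfolding is_code_def by blast

lemma main_bound:
  assumes c0: "is_code 3 16 11 C"
  shows "card C \<le> 29"
proof (rule ccontr)
  assume "\<not> card C \<le> 29"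
  hence "30 \<le> card C" by simp
  then obtain D where D: "D \<subseteq> C" "card D = 30" "finite D" by (rule obtain_subset_with_card_n)
  have c: "is_code 3 16 11 D" using subcode[OF c0 D(1)] .
  have lt: "\<And>u i. u \<in> D \<Longrightarrow> i < 16 \<Longrightarrow> u i < 3"
    using c words_lt unfolding is_code_def by blast
  have le10: "cnt D i t \<le> 10" if i: "i < 16" for i t
  proof (rule ccontr)
    assume "\<not> cnt D i t \<le> 10"
    hence "11 \<le> card {x \<in> D. x i = t}" unfolding cnt_def by simp
    then obtain T where T: "T \<subseteq> {x \<in> D. x i = t}" "card T = 11" "finite T"
      by (rule obtain_subset_with_card_n)
    have "T \<subseteq> D" "\<forall>u\<in>T. u i = t" using T(1) by auto
    from class11[OF c this(1) i this(2)] T(2) show False by simp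
  qed
  have eq10: "cnt D i (x i) = 10" if x: "x \<in> D" and i: "i < 16" for x i
  proof -
    have tot: "cnt D i 0 + cnt D i 1 + cnt D i 2 = 30"
      using cnt_total[of D i] D lt i by auto
    have "x i < 3" using lt x i by blast
    hence "x i = 0 \<or> x i = 1 \<or> x i = 2" by auto
    thus ?thesis using tot le10[OF i, of 0] le10[OF i, of 1] le10[OF i, of 2] by auto
  qed
  have "D \<noteq> {}" using D(2) by auto
  then obtain x where x: "x \<in> D" by blast
  have "(\<Sum>y\<in>D. agr x y) = (\<Sum>i<16. cnt D i (x i))" by (rule row_sum[OF D(3)])
  also have "\<dots> = (\<Sum>i<16::nat. 10)" using eq10[OF x] by (intro sum.cong) auto
  finally have s160: "(\<Sum>y\<in>D. agr x y) = 160" by simp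
  have "(\<Sum>y\<in>D. agr x y) = agr x x + (\<Sum>y\<in>D - {x}. agr x y)"
    using D(3) x by (rule sum.remove)
  with s160 have s144: "(\<Sum>y\<in>D - {x}. agr x y) = 144" by (simp add: agr_self)
  have "\<exists>y\<in>D - {x}. agr x y \<noteq> 0 \<and> agr x y \<noteq> 5"
  proof (rule ccontr)
    assume "\<not> ?thesis"
    hence h: "\<forall>y\<in>D - {x}. agr x y = 0 \<or> agr x y = 5" by blast
    have "\<forall>y\<in>D - {x}. (5::nat) dvd agr x y"
    proof
      fix y assume "y \<in> D - {x}"
      with h have "agr x y = 0 \<or> agr x y = 5" by blast
      thus "(5::nat) dvd agr x y" by auto
    qed
    hence "(5::nat) dvd (\<Sum>y\<in>D - {x}. agr x y)" by (intro dvd_sum) auto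
    with s144 show False by simp
  qed
  then obtain y where y: "y \<in> D" "y \<noteq> x" "agr x y \<noteq> 0" "agr x y \<noteq> 5" by blast
  have "agr x y \<le> 5" using code_agr[OF c x y(1)] y(2) by auto
  with y have y4: "agr x y \<le> 4" by simp
  have "{i \<in> {0..<16}. x i = y i} \<noteq> {}" using y(3) unfolding agr_def by (metis card.empty)
  then obtain i where i: "i < 16" "x i = y i" by auto
  define S where "S = {z \<in> D. z i = x i}"
  have "S \<subseteq> D" "\<forall>u\<in>S. u i = x i" unfolding S_def by auto
  moreover have "card S = 10" unfolding S_def using eq10[OF x i(1)] unfolding cnt_def .
  moreover have "x \<in> S" "y \<in> S" using x y(1) i(2) unfolding S_def by auto
  ultimately show False using class10[OF c _ i(1) _ _ _ _ y(2) y4] by blast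
qed

theorem proposition5p11:
  shows "A 3 16 11 \<le> 29"
proof -
  have sub: "card ` {C. is_code 3 16 11 C} \<subseteq> {..29}" using main_bound by auto
  have fin: "finite (card ` {C. is_code 3 16 11 C})" using finite_subset[OF sub] by simp
  have ne: "card ` {C. is_code 3 16 11 C} \<noteq> {}"
  proof -
    have "is_code 3 16 11 {}" unfolding is_code_def by simp
    thus ?thesis by blast
  qed
  show ?thesis unfolding A_def using sub fin ne by (simp add: Max_le_iff subset_eq)
qed

end
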